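(* Let $(H,B_1,B_2)$ be a Rota-Baxter system of Hopf algebras with cocycle $\sigma$. If $\sigma$ is surjective, then $(H,B_2)$ and $(H,B_1\circ S)$ are Rota-Baxter Hopf algebras.
   Context: $\mathbb{F}$ is a field of characteristic $0$; Sweedler notation $\Delta(a)=a_1\otimes a_2$. A Rota-Baxter system of Hopf algebras is a triple $(H,B_1,B_2)$ where $(H,\cdot,1,\Delta,\epsilon,S)$ is a cocommutative Hopf algebra and $B_1,B_2:H\to H$ are coalgebra homomorphisms with $B_1(1)=B_2(1)=1$ such that for all $a,b\in H$: $B_1(a)B_1(b)=B_1(B_1(a_1)bS(B_2(a_2)))$ and $B_2(a)B_2(b)=B_2(B_1(a_1)bS(B_2(a_2)))$. Its cocycle is $\sigma(a)=B_1(a_1)S(B_2(a_2))$. A Rota-Baxter Hopf algebra is a pair $(H,B)$ where $H$ is a cocommutative Hopf algebra and $B:H\to H$ is a coalgebra homomorphism with $B(a)B(b)=B(a_1B(a_2)\,b\,S(B(a_3)))$ for all $a,b\in H$. *)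

theory Defs
  imports Complex_Main
begin

text \<open>Coproducts are represented by a function giving, for each a, a finite list of pairs
  (x_i, y_i) with Delta(a) = sum_i x_i (tensor) y_i.  Sweedler sums of expressions that are
  bilinear in (a1,a2) are evaluated on this representative.  Equality of tensors in H (tensor) H
  is expressed by equality under all bilinear forms H x H -> k (these separate points of
  H (tensor) H over a field).\<close>

definition sw :: "('h \<Rightarrow> ('h \<times> 'h) list) \<Rightarrow> ('h \<Rightarrow> 'h \<Rightarrow> 'v::comm_monoid_add) \<Rightarrow> 'h \<Rightarrow> 'v" where
  "sw Delta g a = sum_list (map (\<lambda>(x, y). g x y) (Delta a))"

definition bilin :: "('k::field \<Rightarrow> 'h::ring_1 \<Rightarrow> 'h) \<Rightarrow> ('h \<Rightarrow> 'h \<Rightarrow> 'k) \<Rightarrow> bool" where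
  "bilin sc f \<longleftrightarrow> (\<forall>x. Vector_Spaces.linear sc (*) (f x)) \<and> (\<forall>y. Vector_Spaces.linear sc (*) (\<lambda>x. f x y))"

definition trilin :: "('k::field \<Rightarrow> 'h::ring_1 \<Rightarrow> 'h) \<Rightarrow> ('h \<Rightarrow> 'h \<Rightarrow> 'h \<Rightarrow> 'k) \<Rightarrow> bool" where
  "trilin sc t \<longleftrightarrow> (\<forall>y z. Vector_Spaces.linear sc (*) (\<lambda>x. t x y z))
     \<and> (\<forall>x z. Vector_Spaces.linear sc (*) (\<lambda>y. t x y z))
     \<and> (\<forall>x y. Vector_Spaces.linear sc (*) (\<lambda>z. t x y z))"

definition teq :: "('k::field \<Rightarrow> 'h::ring_1 \<Rightarrow> 'h) \<Rightarrow> (('h \<Rightarrow> 'h \<Rightarrow> 'k) \<Rightarrow> 'k) \<Rightarrow> (('h \<Rightarrow> 'h \<Rightarrow> 'k) \<Rightarrow> 'k) \<Rightarrow> bool" where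
  "teq sc s t \<longleftrightarrow> (\<forall>f. bilin sc f \<longrightarrow> s f = t f)"

definition cocomm_hopf ::
  "('k::field \<Rightarrow> 'h::ring_1 \<Rightarrow> 'h) \<Rightarrow> ('h \<Rightarrow> ('h \<times> 'h) list) \<Rightarrow> ('h \<Rightarrow> 'k) \<Rightarrow> ('h \<Rightarrow> 'h) \<Rightarrow> bool" where
  "cocomm_hopf sc Delta eps S \<longleftrightarrow>
     vector_space sc
   \<and> (\<forall>c a b. sc c (a * b) = sc c a * b \<and> sc c (a * b) = a * sc c b)
   \<and> (\<forall>a b. teq sc (\<lambda>f. sw Delta f (a + b)) (\<lambda>f. sw Delta f a + sw Delta f b))
   \<and> (\<forall>c a. teq sc (\<lambda>f. sw Delta f (sc c a)) (\<lambda>f. c * sw Delta f a))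
   \<and> (\<forall>t a. trilin sc t \<longrightarrow>
        sw Delta (\<lambda>x y. sw Delta (\<lambda>u v. t u v y) x) a = sw Delta (\<lambda>x y. sw Delta (\<lambda>u v. t x u v) y) a)
   \<and> Vector_Spaces.linear sc (*) eps
   \<and> (\<forall>a. sw Delta (\<lambda>x y. sc (eps x) y) a = a \<and> sw Delta (\<lambda>x y. sc (eps y) x) a = a)
   \<and> (\<forall>a b. teq sc (\<lambda>f. sw Delta f (a * b))
                     (\<lambda>f. sw Delta (\<lambda>x y. sw Delta (\<lambda>u v. f (x * u) (y * v)) b) a))
   \<and> teq sc (\<lambda>f. sw Delta f 1) (\<lambda>f. f 1 1)
   \<and> (\<forall>a b. eps (a * b) = eps a * eps b) \<and> eps 1 = 1
   \<and> Vector_Spaces.linear sc sc S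
   \<and> (\<forall>a. sw Delta (\<lambda>x y. S x * y) a = sc (eps a) 1 \<and> sw Delta (\<lambda>x y. x * S y) a = sc (eps a) 1)
   \<and> (\<forall>a. teq sc (\<lambda>f. sw Delta f a) (\<lambda>f. sw Delta (\<lambda>x y. f y x) a))"

definition coalg_hom ::
  "('k::field \<Rightarrow> 'h::ring_1 \<Rightarrow> 'h) \<Rightarrow> ('h \<Rightarrow> ('h \<times> 'h) list) \<Rightarrow> ('h \<Rightarrow> 'k) \<Rightarrow> ('h \<Rightarrow> 'h) \<Rightarrow> bool" where
  "coalg_hom sc Delta eps B \<longleftrightarrow>
     Vector_Spaces.linear sc sc B
   \<and> (\<forall>a. teq sc (\<lambda>f. sw Delta f (B a)) (\<lambda>f. sw Delta (\<lambda>x y. f (B x) (B y)) a))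
   \<and> (\<forall>a. eps (B a) = eps a)"

definition rb_system ::
  "('k::field \<Rightarrow> 'h::ring_1 \<Rightarrow> 'h) \<Rightarrow> ('h \<Rightarrow> ('h \<times> 'h) list) \<Rightarrow> ('h \<Rightarrow> 'k) \<Rightarrow> ('h \<Rightarrow> 'h)
    \<Rightarrow> ('h \<Rightarrow> 'h) \<Rightarrow> ('h \<Rightarrow> 'h) \<Rightarrow> bool" where
  "rb_system sc Delta eps S B1 B2 \<longleftrightarrow>
     cocomm_hopf sc Delta eps S
   \<and> coalg_hom sc Delta eps B1 \<and> coalg_hom sc Delta eps B2
   \<and> B1 1 = 1 \<and> B2 1 = 1
   \<and> (\<forall>a b. B1 a * B1 b = B1 (sw Delta (\<lambda>x y. B1 x * b * S (B2 y)) a))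
   \<and> (\<forall>a b. B2 a * B2 b = B2 (sw Delta (\<lambda>x y. B1 x * b * S (B2 y)) a))"

definition rbs_cocycle ::
  "('h::ring_1 \<Rightarrow> ('h \<times> 'h) list) \<Rightarrow> ('h \<Rightarrow> 'h) \<Rightarrow> ('h \<Rightarrow> 'h) \<Rightarrow> ('h \<Rightarrow> 'h) \<Rightarrow> 'h \<Rightarrow> 'h" where
  "rbs_cocycle Delta S B1 B2 a = sw Delta (\<lambda>x y. B1 x * S (B2 y)) a"

text \<open>Rota-Baxter Hopf algebra: B(a)B(b) = B(a1 B(a2) b S(B(a3))), with (a2,a3) from Delta(y)
  where Delta(a) = x (tensor) y (by coassociativity any bracketing gives the same value).\<close>
definition rb_hopf ::
  "('k::field \<Rightarrow> 'h::ring_1 \<Rightarrow> 'h) \<Rightarrow> ('h \<Rightarrow> ('h \<times> 'h) list) \<Rightarrow> ('h \<Rightarrow> 'k) \<Rightarrow> ('h \<Rightarrow> 'h)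
    \<Rightarrow> ('h \<Rightarrow> 'h) \<Rightarrow> bool" where
  "rb_hopf sc Delta eps S B \<longleftrightarrow>
     cocomm_hopf sc Delta eps S
   \<and> coalg_hom sc Delta eps B
   \<and> (\<forall>a b. B a * B b = B (sw Delta (\<lambda>x y. sw Delta (\<lambda>u v. x * B u * b * S (B v)) y) a))"

end

theory Submission
  imports Defs
begin

lemma vs_field: "vector_space ((*)::'k::field \<Rightarrow> 'k \<Rightarrow> 'k)"
  by unfold_locales (auto simp: algebra_simps)

lemma sum_list_map_swap:
  fixes F :: "'a \<Rightarrow> 'b \<Rightarrow> 'c::comm_monoid_add"
  shows "sum_list (map (\<lambda>x. sum_list (map (\<lambda>y. F x y) ys)) xs) = sum_list (map (\<lambda>y. sum_list (map (\<lambda>x. F x y) xs)) ys)"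
  by (induction xs) (auto simp: sum_list_addf)

lemma sw_swap:
  "sw D (\<lambda>x y. sw D (\<lambda>u v. F x y u v) b) a = sw D (\<lambda>u v. sw D (\<lambda>x y. F x y u v) a) b"
  unfolding sw_def using sum_list_map_swap[of "\<lambda>p q. F (fst p) (snd p) (fst q) (snd q)" "D b" "D a"]
  by (simp add: case_prod_beta')

lemma sum_list_map_f: "(\<And>x y. f (x + y) = f x + f y) \<Longrightarrow> f 0 = 0 \<Longrightarrow>
   f (sum_list (map h xs)) = sum_list (map (\<lambda>p. f (h p)) xs)"
  by (induction xs) auto

lemma sw_map:
  assumes "\<And>x y. f (x + y) = f x + f y" "f 0 = 0"
  shows "f (sw D g a) = sw D (\<lambda>x y. f (g x y)) a"
  unfolding sw_def by (subst sum_list_map_f[OF assms]) (simp add: case_prod_beta')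

lemma sw_add: "sw D (\<lambda>x y. g x y + h x y) a = sw D g a + sw D h a"
  unfolding sw_def by (simp add: case_prod_beta' sum_list_addf)

lemma sw_cong: "(\<And>x y. g x y = h x y) \<Longrightarrow> sw D g a = sw D h a"
  by (simp add: sw_def)

locale hctx =
  fixes sc :: "'k::field \<Rightarrow> 'h::ring_1 \<Rightarrow> 'h" and Delta :: "'h \<Rightarrow> ('h \<times> 'h) list"
    and eps :: "'h \<Rightarrow> 'k" and S :: "'h \<Rightarrow> 'h"
  assumes H: "cocomm_hopf sc Delta eps S"
begin

lemma vs: "vector_space sc" using H by (simp add: cocomm_hopf_def)

interpretation V: vector_space sc by (rule vs)

lemma sc_mult: "sc c (a * b) = sc c a * b" "sc c (a * b) = a * sc c b"
  using H unfolding cocomm_hopf_def by blast+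

definition lin :: "('h \<Rightarrow> 'h) \<Rightarrow> bool" where
  "lin f \<longleftrightarrow> (\<forall>x y. f (x+y) = f x + f y) \<and> (\<forall>c x. f (sc c x) = sc c (f x))"
definition klin :: "('h \<Rightarrow> 'k) \<Rightarrow> bool" where
  "klin f \<longleftrightarrow> (\<forall>x y. f (x+y) = f x + f y) \<and> (\<forall>c x. f (sc c x) = c * f x)"
definition bl :: "('h \<Rightarrow> 'h \<Rightarrow> 'h) \<Rightarrow> bool" where
  "bl g \<longleftrightarrow> (\<forall>x. lin (\<lambda>y. g x y)) \<and> (\<forall>y. lin (\<lambda>x. g x y))"
definition tl :: "('h \<Rightarrow> 'h \<Rightarrow> 'h \<Rightarrow> 'h) \<Rightarrow> bool" where
  "tl t \<longleftrightarrow> (\<forall>y z. lin (\<lambda>x. t x y z)) \<and> (\<forall>x z. lin (\<lambda>y. t x y z)) \<and> (\<forall>x y. lin (\<lambda>z. t x y z))"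

lemma linear_lin: "Vector_Spaces.linear sc sc f \<longleftrightarrow> lin f"
  unfolding Vector_Spaces.linear_iff lin_def using vs by auto
lemma linear_klin: "Vector_Spaces.linear sc (*) f \<longleftrightarrow> klin f"
  unfolding Vector_Spaces.linear_iff klin_def using vs vs_field by auto

lemma lin_add: "lin f \<Longrightarrow> f (x + y) = f x + f y" by (simp add: lin_def)
lemma lin_scale: "lin f \<Longrightarrow> f (sc c x) = sc c (f x)" by (simp add: lin_def)
lemma lin_0: "lin f \<Longrightarrow> f 0 = 0"
  by (metis V.scale_zero_left lin_scale)
lemma klin_add: "klin f \<Longrightarrow> f (x + y) = f x + f y" by (simp add: klin_def)
lemma klin_scale: "klin f \<Longrightarrow> f (sc c x) = c * f x" by (simp add: klin_def)
lemma klin_0: "klin f \<Longrightarrow> f 0 = 0"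
  by (metis V.scale_zero_left klin_scale mult_zero_left)

lemma lin_sw_map: "lin f \<Longrightarrow> f (sw D g a) = sw D (\<lambda>x y. f (g x y)) a"
  by (rule sw_map) (auto simp: lin_add lin_0)
lemma klin_sw_map: "klin f \<Longrightarrow> f (sw D g a) = sw D (\<lambda>x y. f (g x y)) a"
  by (rule sw_map) (auto simp: klin_add klin_0)

lemma sep:
  assumes "\<And>\<phi>. klin \<phi> \<Longrightarrow> \<phi> u = \<phi> v" shows "u = v"
proof (rule ccontr)
  assume ne: "u \<noteq> v"
  define h where "h = u - v"
  have h0: "h \<noteq> 0" using ne by (simp add: h_def)
  interpret P: vector_space_pair sc "(*)"
    by (simp add: vector_space_pair_def vs vs_field)
  have ind: "V.independent {h}" using h0 by simp
  define \<phi> where "\<phi> = P.construct {h} (\<lambda>_. (1::'k))"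
  have "Vector_Spaces.linear sc (*) \<phi>" unfolding \<phi>_def by (rule P.linear_construct[OF ind])
  then have k: "klin \<phi>" by (simp add: linear_klin)
  have "\<phi> h = 1" unfolding \<phi>_def by (rule P.construct_basis[OF ind]) simp
  moreover have "\<phi> h + \<phi> v = \<phi> u" using klin_add[OF k, of h v] by (simp add: h_def)
  ultimately show False using assms[OF k] by simp
qed

lemma bilin_comp: "klin \<phi> \<Longrightarrow> bl g \<Longrightarrow> bilin sc (\<lambda>x y. \<phi> (g x y))"
  unfolding bilin_def bl_def linear_klin klin_def lin_def by auto

lemma trilin_comp: "klin \<phi> \<Longrightarrow> tl t \<Longrightarrow> trilin sc (\<lambda>x y z. \<phi> (t x y z))"
  unfolding trilin_def tl_def linear_klin klin_def lin_def by auto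

lemma teqD: "teq sc P Q \<Longrightarrow> bilin sc f \<Longrightarrow> P f = Q f" by (simp add: teq_def)

lemma Delta_lin: assumes "bl g" shows "lin (\<lambda>a. sw Delta g a)"
proof -
  have A: "teq sc (\<lambda>f. sw Delta f (a + b)) (\<lambda>f. sw Delta f a + sw Delta f b)" for a b
    using H by (simp add: cocomm_hopf_def)
  have B: "teq sc (\<lambda>f. sw Delta f (sc c a)) (\<lambda>f. c * sw Delta f a)" for c a
    using H by (simp add: cocomm_hopf_def)
  show ?thesis unfolding lin_def
  proof safe
    fix a b show "sw Delta g (a + b) = sw Delta g a + sw Delta g b"
    proof (rule sep)
      fix \<phi> assume k: "klin \<phi>"
      show "\<phi> (sw Delta g (a + b)) = \<phi> (sw Delta g a + sw Delta g b)"
        using teqD[OF A bilin_comp[OF k assms]] by (simp add: klin_sw_map[OF k] klin_add[OF k])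
    qed
  next
    fix c a show "sw Delta g (sc c a) = sc c (sw Delta g a)"
    proof (rule sep)
      fix \<phi> assume k: "klin \<phi>"
      show "\<phi> (sw Delta g (sc c a)) = \<phi> (sc c (sw Delta g a))"
        using teqD[OF B bilin_comp[OF k assms]] by (simp add: klin_sw_map[OF k] klin_scale[OF k])
    qed
  qed
qed


lemma lin_id: "lin (\<lambda>x. x)" by (simp add: lin_def)
lemma lin_ml: "lin f \<Longrightarrow> lin (\<lambda>x. p * f x)"
  by (simp add: lin_def distrib_left sc_mult(2))
lemma lin_mr: "lin f \<Longrightarrow> lin (\<lambda>x. f x * q)"
  by (simp add: lin_def distrib_right sc_mult(1))
lemma lin_plus: "lin f \<Longrightarrow> lin g \<Longrightarrow> lin (\<lambda>x. f x + g x)"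
  by (simp add: lin_def V.scale_right_distrib)
lemma lin_comp: "lin g \<Longrightarrow> lin f \<Longrightarrow> lin (\<lambda>x. g (f x))"
  by (simp add: lin_def)
lemma S_lin: "lin S" using H by (simp add: cocomm_hopf_def linear_lin)
lemma lin_S: "lin f \<Longrightarrow> lin (\<lambda>x. S (f x))"
  by (rule lin_comp[OF S_lin])
lemma lin_sw: "bl g \<Longrightarrow> lin f \<Longrightarrow> lin (\<lambda>x. sw Delta g (f x))"
  by (rule lin_comp[OF Delta_lin])
lemma lin_swfun: "(\<And>u v. lin (\<lambda>x. G x u v)) \<Longrightarrow> lin (\<lambda>x. sw D (\<lambda>u v. G x u v) c)"
proof -
  assume a: "\<And>u v. lin (\<lambda>x. G x u v)"
  show ?thesis unfolding lin_def
  proof safe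
    fix x y show "sw D (\<lambda>u v. G (x + y) u v) c = sw D (\<lambda>u v. G x u v) c + sw D (\<lambda>u v. G y u v) c"
      by (simp add: lin_add[OF a] sw_add)
  next
    fix k x show "sw D (\<lambda>u v. G (sc k x) u v) c = sc k (sw D (\<lambda>u v. G x u v) c)"
      apply (subst lin_sw_map[of "sc k"])
       apply (simp add: lin_def V.scale_right_distrib V.scale_scale mult.commute)
      apply (rule sw_cong) apply (rule lin_scale[OF a]) done
  qed
qed
lemma blI: "(\<And>x. lin (\<lambda>y. g x y)) \<Longrightarrow> (\<And>y. lin (\<lambda>x. g x y)) \<Longrightarrow> bl g"
  by (simp add: bl_def)
lemma tlI: "(\<And>y z. lin (\<lambda>x. t x y z)) \<Longrightarrow> (\<And>x z. lin (\<lambda>y. t x y z)) \<Longrightarrow> (\<And>x y. lin (\<lambda>z. t x y z)) \<Longrightarrow> tl t"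
  by (simp add: tl_def)
lemma lin_bl1: "bl g \<Longrightarrow> lin f \<Longrightarrow> lin (\<lambda>x. g (f x) c)"
  unfolding bl_def by (auto intro: lin_comp[of "\<lambda>x. g x c", simplified])
lemma lin_bl2: "bl g \<Longrightarrow> lin f \<Longrightarrow> lin (\<lambda>x. g c (f x))"
  unfolding bl_def by (auto intro: lin_comp[of "g c", simplified])

lemma lin_scc: "lin f \<Longrightarrow> lin (\<lambda>x. sc c (f x))"
  by (simp add: lin_def V.scale_right_distrib V.scale_scale mult.commute)

lemmas LR = lin_scc lin_id lin_ml lin_mr lin_plus lin_S lin_swfun lin_sw blI tlI

lemma eps_klin: "klin eps" using H by (simp add: cocomm_hopf_def linear_klin)
lemma eps_mult: "eps (a * b) = eps a * eps b" and eps_1: "eps 1 = 1"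
  using H by (simp_all add: cocomm_hopf_def)
lemma counit1: "sw Delta (\<lambda>x y. sc (eps x) y) a = a" and counit2: "sw Delta (\<lambda>x y. sc (eps y) x) a = a"
  using H by (simp_all add: cocomm_hopf_def)
lemma anti1: "sw Delta (\<lambda>x y. S x * y) a = sc (eps a) 1" and anti2: "sw Delta (\<lambda>x y. x * S y) a = sc (eps a) 1"
  using H by (simp_all add: cocomm_hopf_def)

lemma coassoc:
  assumes "tl t"
  shows "sw Delta (\<lambda>x y. sw Delta (\<lambda>u v. t u v y) x) a = sw Delta (\<lambda>x y. sw Delta (\<lambda>u v. t x u v) y) a"
proof (rule sep)
  fix \<phi> assume k: "klin \<phi>"
  have "\<forall>t a. trilin sc t \<longrightarrow>
        sw Delta (\<lambda>x y. sw Delta (\<lambda>u v. t u v y) x) a = sw Delta (\<lambda>x y. sw Delta (\<lambda>u v. t x u v) y) a"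
    using H unfolding cocomm_hopf_def by blast
  then show "\<phi> (sw Delta (\<lambda>x y. sw Delta (\<lambda>u v. t u v y) x) a) = \<phi> (sw Delta (\<lambda>x y. sw Delta (\<lambda>u v. t x u v) y) a)"
    using trilin_comp[OF k assms] by (simp add: klin_sw_map[OF k])
qed

lemma cocomm:
  assumes "bl g" shows "sw Delta g a = sw Delta (\<lambda>x y. g y x) a"
proof (rule sep)
  fix \<phi> assume k: "klin \<phi>"
  have T: "teq sc (\<lambda>f. sw Delta f a) (\<lambda>f. sw Delta (\<lambda>x y. f y x) a)"
    using H unfolding cocomm_hopf_def by blast
  show "\<phi> (sw Delta g a) = \<phi> (sw Delta (\<lambda>x y. g y x) a)"
    using teqD[OF T bilin_comp[OF k assms]] by (simp add: klin_sw_map[OF k])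
qed

lemma mult:
  assumes "bl g" shows "sw Delta g (a * b) = sw Delta (\<lambda>x y. sw Delta (\<lambda>u v. g (x * u) (y * v)) b) a"
proof (rule sep)
  fix \<phi> assume k: "klin \<phi>"
  have T: "teq sc (\<lambda>f. sw Delta f (a * b))
                     (\<lambda>f. sw Delta (\<lambda>x y. sw Delta (\<lambda>u v. f (x * u) (y * v)) b) a)"
    using H unfolding cocomm_hopf_def by blast
  show "\<phi> (sw Delta g (a * b)) = \<phi> (sw Delta (\<lambda>x y. sw Delta (\<lambda>u v. g (x * u) (y * v)) b) a)"
    using teqD[OF T bilin_comp[OF k assms]] by (simp add: klin_sw_map[OF k])
qed

lemma unit:
  assumes "bl g" shows "sw Delta g 1 = g 1 1"
proof (rule sep)
  fix \<phi> assume k: "klin \<phi>"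
  have T: "teq sc (\<lambda>f. sw Delta f 1) (\<lambda>f. f 1 1)"
    using H unfolding cocomm_hopf_def by blast
  show "\<phi> (sw Delta g 1) = \<phi> (g 1 1)"
    using teqD[OF T bilin_comp[OF k assms]] by (simp add: klin_sw_map[OF k])
qed

lemma chom:
  assumes "coalg_hom sc Delta eps B" "bl g"
  shows "sw Delta g (B a) = sw Delta (\<lambda>x y. g (B x) (B y)) a"
proof (rule sep)
  fix \<phi> assume k: "klin \<phi>"
  have T: "teq sc (\<lambda>f. sw Delta f (B a)) (\<lambda>f. sw Delta (\<lambda>x y. f (B x) (B y)) a)"
    using assms unfolding coalg_hom_def by blast
  show "\<phi> (sw Delta g (B a)) = \<phi> (sw Delta (\<lambda>x y. g (B x) (B y)) a)"
    using teqD[OF T bilin_comp[OF k assms(2)]] by (simp add: klin_sw_map[OF k])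
qed


lemma eps_sc: "eps (sc c x) = c * eps x" by (rule klin_scale[OF eps_klin])
lemma eps_split: "sw Delta (\<lambda>x y. eps x * eps y) a = eps a"
proof -
  have "eps a = eps (sw Delta (\<lambda>x y. sc (eps x) y) a)" by (simp add: counit1)
  also have "\<dots> = sw Delta (\<lambda>x y. eps x * eps y) a" by (simp add: klin_sw_map[OF eps_klin] eps_sc)
  finally show ?thesis by simp
qed
lemma sc_sw: "sc (sw D f a) w = sw D (\<lambda>x y. sc (f x y) w) a"
  by (rule sw_map[of "\<lambda>c. sc c w"]) (auto simp: V.scale_left_distrib)

lemma eps_S: "eps (S a) = eps a"
proof -
  have "eps a = eps (sc (eps a) 1)" by (simp add: eps_sc eps_1)
  also have "\<dots> = sw Delta (\<lambda>x y. eps (S x) * eps y) a"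
    by (simp add: anti1[symmetric] klin_sw_map[OF eps_klin] eps_mult)
  also have "\<dots> = eps (S (sw Delta (\<lambda>x y. sc (eps y) x) a))"
    by (simp add: klin_sw_map[OF eps_klin] lin_sw_map[OF S_lin] lin_scale[OF S_lin] eps_sc mult.commute)
  finally show ?thesis by (simp add: counit2)
qed

lemma sym23:
  assumes "tl t"
  shows "sw Delta (\<lambda>x y. sw Delta (\<lambda>u v. t x u v) y) a = sw Delta (\<lambda>x y. sw Delta (\<lambda>u v. t x v u) y) a"
  apply (rule sw_cong) apply (rule cocomm) using assms by (auto simp: tl_def bl_def)

lemma sym12:
  assumes "tl t"
  shows "sw Delta (\<lambda>x y. sw Delta (\<lambda>u v. t x u v) y) a = sw Delta (\<lambda>x y. sw Delta (\<lambda>u v. t u x v) y) a"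
proof -
  have "sw Delta (\<lambda>x y. sw Delta (\<lambda>u v. t x u v) y) a = sw Delta (\<lambda>x y. sw Delta (\<lambda>u v. t u v y) x) a"
    by (rule coassoc[OF assms, symmetric])
  also have "\<dots> = sw Delta (\<lambda>x y. sw Delta (\<lambda>u v. t v u y) x) a"
    apply (rule sw_cong) apply (rule cocomm) using assms unfolding tl_def bl_def by auto
  also have "\<dots> = sw Delta (\<lambda>x y. sw Delta (\<lambda>u v. t u x v) y) a"
    using coassoc[of "\<lambda>p q r. t q p r" a] assms unfolding tl_def bl_def by auto
  finally show ?thesis .
qed

lemma mid4:
  assumes "\<And>v p q. lin (\<lambda>u. h u v p q)" "\<And>u p q. lin (\<lambda>v. h u v p q)"
    "\<And>u v q. lin (\<lambda>p. h u v p q)" "\<And>u v p. lin (\<lambda>q. h u v p q)"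
  shows "sw Delta (\<lambda>x y. sw Delta (\<lambda>u v. sw Delta (\<lambda>p q. h u v p q) y) x) a
       = sw Delta (\<lambda>x y. sw Delta (\<lambda>u v. sw Delta (\<lambda>p q. h u p v q) y) x) a"
proof -
  have "sw Delta (\<lambda>x y. sw Delta (\<lambda>u v. sw Delta (\<lambda>p q. h u v p q) y) x) a
      = sw Delta (\<lambda>x y. sw Delta (\<lambda>u v. sw Delta (\<lambda>p q. h x u p q) v) y) a"
    by (rule coassoc[of "\<lambda>u v y. sw Delta (\<lambda>p q. h u v p q) y"]) (rule LR assms)+
  also have "\<dots> = sw Delta (\<lambda>x y. sw Delta (\<lambda>u v. sw Delta (\<lambda>p q. h x p u q) v) y) a"
    apply (rule sw_cong) subgoal for x y by (rule sym12[of "\<lambda>u p q. h x u p q"]) (rule LR assms)+ done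
  also have "\<dots> = sw Delta (\<lambda>x y. sw Delta (\<lambda>u v. sw Delta (\<lambda>p q. h u p v q) y) x) a"
    by (rule coassoc[of "\<lambda>u v y. sw Delta (\<lambda>p q. h u p v q) y", symmetric]) (rule LR assms)+
  finally show ?thesis .
qed

lemma elem:
  assumes "bl g"
  shows "sw Delta (\<lambda>x y. sw Delta (\<lambda>u v. sw Delta (\<lambda>p q. g (u * S p) (v * S q)) y) x) b = sc (eps b) (g 1 1)"
proof -
  have l1: "lin (\<lambda>y. g x y)" "lin (\<lambda>x. g x y)" for x y using assms unfolding bl_def by auto
  have "sw Delta (\<lambda>x y. sw Delta (\<lambda>u v. sw Delta (\<lambda>p q. g (u * S p) (v * S q)) y) x) b
      = sw Delta (\<lambda>x y. sw Delta (\<lambda>u v. sw Delta (\<lambda>p q. g (u * S v) (p * S q)) y) x) b"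
    apply (rule mid4) by (rule LR lin_bl1[OF assms] lin_bl2[OF assms])+
  also have "\<dots> = sw Delta (\<lambda>x y. sw Delta (\<lambda>u v. sc (eps y) (g (u * S v) 1)) x) b"
    apply (rule sw_cong) apply (rule sw_cong)
    subgoal for x y u v
      using lin_sw_map[OF l1(1), where D=Delta and g="\<lambda>p q. p * S q" and a=y] by (simp add: anti2 lin_scale[OF l1(1)])
    done
  also have "\<dots> = sw Delta (\<lambda>x y. sc (eps y) (sc (eps x) (g 1 1))) b"
    apply (rule sw_cong)
    subgoal for x y
    proof -
      have l: "lin (\<lambda>z. sc (eps y) (g z 1))" by (rule lin_scc l1)+
      show ?thesis
        using lin_sw_map[OF l, where D=Delta and g="\<lambda>u v. u * S v" and a=x] by (simp add: anti2 lin_scale[OF l1(2)])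
    qed
    done
  also have "\<dots> = sc (sw Delta (\<lambda>x y. eps x * eps y) b) (g 1 1)"
    unfolding sc_sw by (rule sw_cong) (simp add: mult.commute)
  also have "\<dots> = sc (eps b) (g 1 1)" by (simp only: eps_split)
  finally show ?thesis .
qed


lemma DS:
  assumes bg: "bl g"
  shows "sw Delta g (S a) = sw Delta (\<lambda>x y. g (S x) (S y)) a"
proof -
  note R = LR lin_bl1[OF bg] lin_bl2[OF bg]
  define Q where "Q z = sw Delta (\<lambda>x y. g (S x) (S y)) z" for z
  define F where "F x y1 y2 = sw Delta (\<lambda>m n. sw Delta (\<lambda>u v. sw Delta (\<lambda>p q. g (m * (u * S p)) (n * (v * S q))) y2) y1) (S x)" for x y1 y2
  have lP: "lin (\<lambda>z. sw Delta g (S z))" by (rule R)+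
  have lQ: "lin Q" unfolding Q_def by (rule R)+
  have "sw Delta g (S a) = sw Delta (\<lambda>x y. sc (eps y) (sw Delta g (S x))) a"
    using lin_sw_map[OF lP, where D=Delta and g="\<lambda>x y. sc (eps y) x" and a=a]
    by (simp add: counit2 lin_scale[OF lP])
  also have "\<dots> = sw Delta (\<lambda>x y. sw Delta (\<lambda>y1 y2. F x y1 y2) y) a"
  proof (rule sw_cong)
    fix x y
    have "sc (eps y) (sw Delta g (S x)) = sw Delta (\<lambda>m n. sc (eps y) (g m n)) (S x)"
      by (rule lin_sw_map) (rule R)+
    also have "\<dots> = sw Delta (\<lambda>m n. sw Delta (\<lambda>y1 y2. sw Delta (\<lambda>u v. sw Delta (\<lambda>p q. g (m * (u * S p)) (n * (v * S q))) y2) y1) y) (S x)"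
    proof (rule sw_cong)
      fix m n
      have "bl (\<lambda>s t. g (m * s) (n * t))" by (rule R)+
      from elem[OF this, of y] show "sc (eps y) (g m n) = sw Delta (\<lambda>y1 y2. sw Delta (\<lambda>u v. sw Delta (\<lambda>p q. g (m * (u * S p)) (n * (v * S q))) y2) y1) y"
        by simp
    qed
    also have "\<dots> = sw Delta (\<lambda>y1 y2. F x y1 y2) y"
      unfolding F_def by (rule sw_swap)
    finally show "sc (eps y) (sw Delta g (S x)) = sw Delta (\<lambda>y1 y2. F x y1 y2) y" .
  qed
  also have "\<dots> = sw Delta (\<lambda>x y. sw Delta (\<lambda>x1 x2. F x1 x2 y) x) a"
    by (rule coassoc[symmetric]) (unfold F_def, (rule R)+)
  also have "\<dots> = sw Delta (\<lambda>x y. sc (eps x) (Q y)) a"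
  proof (rule sw_cong)
    fix x y
    define K where "K s t = sw Delta (\<lambda>p q. g (s * S p) (t * S q)) y" for s t
    have bK: "bl K" unfolding K_def by (rule R)+
    have "sw Delta (\<lambda>x1 x2. F x1 x2 y) x = sw Delta (\<lambda>x1 x2. sw Delta K (S x1 * x2)) x"
      apply (rule sw_cong) unfolding mult[OF bK] F_def K_def by (simp add: mult.assoc)
    also have "\<dots> = sw Delta K (sw Delta (\<lambda>x1 x2. S x1 * x2) x)"
      by (rule lin_sw_map[symmetric]) (rule Delta_lin[OF bK])
    also have "\<dots> = sc (eps x) (K 1 1)"
      by (simp add: anti1 lin_scale[OF Delta_lin[OF bK]] unit[OF bK])
    also have "\<dots> = sc (eps x) (Q y)" by (simp add: K_def Q_def)
    finally show "sw Delta (\<lambda>x1 x2. F x1 x2 y) x = sc (eps x) (Q y)" .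
  qed
  also have "\<dots> = Q a"
    using lin_sw_map[OF lQ, where D=Delta and g="\<lambda>x y. sc (eps x) y" and a=a]
    by (simp add: counit1 lin_scale[OF lQ])
  finally show ?thesis by (simp add: Q_def)
qed


lemmas sc_out = sc_mult[symmetric]

lemma S_mult: "S (a * b) = S b * S a"
proof -
  have step2: "sc (eps a') (S (x * b)) = sw Delta (\<lambda>y a2. sw Delta (\<lambda>u b'. sw Delta (\<lambda>v b2. S (x * u) * y * v * S b2 * S a2) b') b) a'"
    for x a'
  proof -
    have "sw Delta (\<lambda>y a2. sw Delta (\<lambda>u b'. sw Delta (\<lambda>v b2. S (x * u) * y * v * S b2 * S a2) b') b) a'
        = sw Delta (\<lambda>y a2. sw Delta (\<lambda>u b'. sc (eps b') (S (x * u) * y * S a2)) b) a'"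
    proof (rule sw_cong, rule sw_cong)
      fix y a2 u b'
      have l: "lin (\<lambda>z. S (x * u) * y * z * S a2)" by (rule LR)+
      show "sw Delta (\<lambda>v b2. S (x * u) * y * v * S b2 * S a2) b' = sc (eps b') (S (x * u) * y * S a2)"
        using lin_sw_map[OF l, where D=Delta and g="\<lambda>v b2. v * S b2" and a=b'] by (simp add: anti2 sc_out mult.assoc)
    qed
    also have "\<dots> = sw Delta (\<lambda>y a2. S (x * b) * y * S a2) a'"
    proof (rule sw_cong)
      fix y a2
      have l: "lin (\<lambda>z. S (x * z) * y * S a2)" by (rule LR)+
      show "sw Delta (\<lambda>u b'. sc (eps b') (S (x * u) * y * S a2)) b = S (x * b) * y * S a2"
        using lin_sw_map[OF l, where D=Delta and g="\<lambda>u b'. sc (eps b') u" and a=b] by (simp add: counit2 lin_scale[OF l])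
    qed
    also have "\<dots> = sc (eps a') (S (x * b))"
    proof -
      have l: "lin (\<lambda>z. S (x * b) * z)" by (rule LR)+
      show ?thesis
        using lin_sw_map[OF l, where D=Delta and g="\<lambda>y a2. y * S a2" and a=a'] by (simp add: anti2 sc_out mult.assoc)
    qed
    finally show ?thesis by simp
  qed
  have lS: "lin (\<lambda>x. S (x * b))" by (rule LR)+
  have "S (a * b) = sw Delta (\<lambda>x a'. sc (eps a') (S (x * b))) a"
    using lin_sw_map[OF lS, where D=Delta and g="\<lambda>x y. sc (eps y) x" and a=a] by (simp add: counit2 lin_scale[OF lS])
  also have "\<dots> = sw Delta (\<lambda>x a'. sw Delta (\<lambda>y a2. sw Delta (\<lambda>u b'. sw Delta (\<lambda>v b2. S (x * u) * y * v * S b2 * S a2) b') b) a') a"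
    by (simp only: step2)
  also have "\<dots> = sw Delta (\<lambda>a1 a2. sw Delta (\<lambda>x y. sw Delta (\<lambda>u b'. sw Delta (\<lambda>v b2. S (x * u) * y * v * S b2 * S a2) b') b) a1) a"
    by (rule coassoc[symmetric]) (rule LR)+
  also have "\<dots> = sw Delta (\<lambda>a1 a2. sw Delta (\<lambda>x y. sw Delta (\<lambda>b1 b2. sw Delta (\<lambda>u v. S (x * u) * y * v * S b2 * S a2) b1) b) a1) a"
    apply (rule sw_cong) apply (rule sw_cong)
    by (rule coassoc[symmetric]) (rule LR)+
  also have "\<dots> = sw Delta (\<lambda>a1 a2. sw Delta (\<lambda>b1 b2. sw Delta (\<lambda>x y. sw Delta (\<lambda>u v. S (x * u) * y * v * S b2 * S a2) b1) a1) b) a"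
    apply (rule sw_cong) by (rule sw_swap)
  also have "\<dots> = sw Delta (\<lambda>a1 a2. sw Delta (\<lambda>b1 b2. sc (eps a1 * eps b1) (S b2 * S a2)) b) a"
  proof (rule sw_cong, rule sw_cong)
    fix a1 a2 b1 b2
    have bg: "bl (\<lambda>s t. S s * t * (S b2 * S a2))" by (rule LR)+
    have "sw Delta (\<lambda>x y. sw Delta (\<lambda>u v. S (x * u) * y * v * S b2 * S a2) b1) a1
        = sw Delta (\<lambda>s t. S s * t * (S b2 * S a2)) (a1 * b1)"
      unfolding mult[OF bg] by (simp add: mult.assoc)
    also have "\<dots> = sc (eps a1 * eps b1) (S b2 * S a2)"
    proof -
      have l: "lin (\<lambda>z. z * (S b2 * S a2))" by (rule LR)+
      show ?thesis
        using lin_sw_map[OF l, where D=Delta and g="\<lambda>s t. S s * t" and a="a1 * b1"]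
        by (simp add: anti1 sc_out eps_mult mult.assoc)
    qed
    finally show "sw Delta (\<lambda>x y. sw Delta (\<lambda>u v. S (x * u) * y * v * S b2 * S a2) b1) a1 = sc (eps a1 * eps b1) (S b2 * S a2)" .
  qed
  also have "\<dots> = sw Delta (\<lambda>a1 a2. sc (eps a1) (S b * S a2)) a"
  proof (rule sw_cong)
    fix a1 a2
    have l: "lin (\<lambda>z. sc (eps a1) (S z * S a2))" by (rule LR)+
    show "sw Delta (\<lambda>b1 b2. sc (eps a1 * eps b1) (S b2 * S a2)) b = sc (eps a1) (S b * S a2)"
      using lin_sw_map[OF l, where D=Delta and g="\<lambda>b1 b2. sc (eps b1) b2" and a=b]
      by (simp add: counit1 lin_scale[OF S_lin] sc_out V.scale_scale)
  qed
  also have "\<dots> = S b * S a"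
  proof -
    have l: "lin (\<lambda>z. S b * S z)" by (rule LR)+
    show ?thesis
      using lin_sw_map[OF l, where D=Delta and g="\<lambda>a1 a2. sc (eps a1) a2" and a=a]
      by (simp add: counit1 lin_scale[OF l])
  qed
  finally show ?thesis .
qed


lemma S_1: "S 1 = 1"
proof -
  have "sw Delta (\<lambda>x y. S x * y) 1 = S 1 * 1" by (rule unit) (rule LR)+
  then show ?thesis by (simp add: anti1 eps_1)
qed

lemma S_S: "S (S a) = a"
proof -
  have lSS: "lin (\<lambda>z. S (S z))" by (rule LR)+
  have "S (S a) = sw Delta (\<lambda>x y. sc (eps y) (S (S x))) a"
    using lin_sw_map[OF lSS, where D=Delta and g="\<lambda>x y. sc (eps y) x" and a=a] by (simp add: counit2 lin_scale[OF lSS])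
  also have "\<dots> = sw Delta (\<lambda>x y. sw Delta (\<lambda>u v. S (u * S x) * v) y) a"
  proof (rule sw_cong)
    fix x y
    have l: "lin (\<lambda>z. S (S x) * z)" by (rule LR)+
    show "sc (eps y) (S (S x)) = sw Delta (\<lambda>u v. S (u * S x) * v) y"
      using lin_sw_map[OF l, where D=Delta and g="\<lambda>u v. S u * v" and a=y] by (simp add: anti1 sc_out S_mult mult.assoc)
  qed
  also have "\<dots> = sw Delta (\<lambda>x y. sw Delta (\<lambda>u v. S (v * S u) * y) x) a"
    by (rule coassoc[of "\<lambda>u v y. S (v * S u) * y", symmetric]) (rule LR)+
  also have "\<dots> = sw Delta (\<lambda>x y. sc (eps x) y) a"
  proof (rule sw_cong)
    fix x y
    have l: "lin (\<lambda>z. S z * y)" by (rule LR)+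
    have c: "sw Delta (\<lambda>u v. v * S u) x = sc (eps x) 1"
      using cocomm[of "\<lambda>u v. v * S u" x] anti2[of x] by (simp add: bl_def lin_mr lin_ml lin_S lin_id)
    show "sw Delta (\<lambda>u v. S (v * S u) * y) x = sc (eps x) y"
      using lin_sw_map[OF l, where D=Delta and g="\<lambda>u v. v * S u" and a=x] by (simp add: c lin_scale[OF S_lin] S_1 sc_out)
  qed
  also have "\<dots> = a" by (rule counit1)
  finally show ?thesis .
qed

end

locale rbctx = hctx +
  fixes B1 B2
  assumes RBS: "rb_system sc Delta eps S B1 B2"
    and SU: "surj (rbs_cocycle Delta S B1 B2)"
begin

interpretation V: vector_space sc by (rule vs)

lemma ch1: "coalg_hom sc Delta eps B1" and ch2: "coalg_hom sc Delta eps B2"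
  using RBS by (simp_all add: rb_system_def)
lemma B1_1: "B1 1 = 1" and B2_1: "B2 1 = 1" using RBS by (simp_all add: rb_system_def)
lemma RB1: "B1 a * B1 b = B1 (sw Delta (\<lambda>x y. B1 x * b * S (B2 y)) a)"
  and RB2: "B2 a * B2 b = B2 (sw Delta (\<lambda>x y. B1 x * b * S (B2 y)) a)"
  using RBS by (simp_all add: rb_system_def)
lemma B1_lin: "lin B1" and B2_lin: "lin B2"
  using ch1 ch2 by (simp_all add: coalg_hom_def linear_lin)
lemma eps_B1: "eps (B1 a) = eps a" and eps_B2: "eps (B2 a) = eps a"
  using ch1 ch2 by (simp_all add: coalg_hom_def)
lemma lin_B1: "lin f \<Longrightarrow> lin (\<lambda>x. B1 (f x))" by (rule lin_comp[OF B1_lin])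
lemma lin_B2: "lin f \<Longrightarrow> lin (\<lambda>x. B2 (f x))" by (rule lin_comp[OF B2_lin])
lemmas LR2 = LR lin_B1 lin_B2

definition sig where "sig a = sw Delta (\<lambda>x y. B1 x * S (B2 y)) a"
lemma sig_eq: "rbs_cocycle Delta S B1 B2 = sig"
  by (simp add: fun_eq_iff rbs_cocycle_def sig_def)

lemma B1_sig: "B1 (sig a) = B1 a"
  using RB1[of a 1] by (simp add: B1_1 sig_def)
lemma B2_sig: "B2 (sig a) = B2 a"
  using RB2[of a 1] by (simp add: B2_1 sig_def)

lemma sig_D:
  assumes bg: "bl g"
  shows "sw Delta g (sig a) = sw Delta (\<lambda>x y. g (sig x) (sig y)) a"
proof -
  note R = LR2 lin_bl1[OF bg] lin_bl2[OF bg]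
  have "sw Delta g (sig a) = sw Delta (\<lambda>x y. sw Delta g (B1 x * S (B2 y))) a"
    unfolding sig_def by (rule lin_sw_map[OF Delta_lin[OF bg]])
  also have "\<dots> = sw Delta (\<lambda>x y. sw Delta (\<lambda>m n. sw Delta (\<lambda>u v. g (B1 m * S (B2 u)) (B1 n * S (B2 v))) y) x) a"
  proof (rule sw_cong)
    fix x y
    have b1: "bl (\<lambda>m n. sw Delta (\<lambda>u v. g (m * u) (n * v)) (S (B2 y)))" by (rule R)+
    have b2: "bl (\<lambda>p q. g (m * p) (n * q))" for m n by (rule R)+
    have b3: "bl (\<lambda>p q. g (m * S p) (n * S q))" for m n by (rule R)+
    have b4: "bl (\<lambda>m n. sw Delta (\<lambda>u v. g (m * S (B2 u)) (n * S (B2 v))) y)" by (rule R)+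
    have "sw Delta g (B1 x * S (B2 y)) = sw Delta (\<lambda>m n. sw Delta (\<lambda>u v. g (m * u) (n * v)) (S (B2 y))) (B1 x)"
      by (rule mult[OF bg])
    also have "\<dots> = sw Delta (\<lambda>m n. sw Delta (\<lambda>u v. g (m * S (B2 u)) (n * S (B2 v))) y) (B1 x)"
      apply (rule sw_cong) unfolding DS[OF b2] chom[OF ch2 b3] ..
    also have "\<dots> = sw Delta (\<lambda>m n. sw Delta (\<lambda>u v. g (B1 m * S (B2 u)) (B1 n * S (B2 v))) y) x"
      by (rule chom[OF ch1 b4])
    finally show "sw Delta g (B1 x * S (B2 y)) = sw Delta (\<lambda>m n. sw Delta (\<lambda>u v. g (B1 m * S (B2 u)) (B1 n * S (B2 v))) y) x" .
  qed
  also have "\<dots> = sw Delta (\<lambda>x y. sw Delta (\<lambda>u v. sw Delta (\<lambda>p q. g (B1 u * S (B2 v)) (B1 p * S (B2 q))) y) x) a"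
    by (rule mid4) (rule R)+
  also have "\<dots> = sw Delta (\<lambda>x y. g (sig x) (sig y)) a"
  proof (rule sw_cong)
    fix x y
    have l1: "lin (\<lambda>z. g c z)" for c by (rule R)+
    have l2: "lin (\<lambda>z. g z c)" for c by (rule R)+
    show "sw Delta (\<lambda>u v. sw Delta (\<lambda>p q. g (B1 u * S (B2 v)) (B1 p * S (B2 q))) y) x = g (sig x) (sig y)"
    proof -
      have "g (sig x) (sig y) = sw Delta (\<lambda>u v. g (B1 u * S (B2 v)) (sig y)) x"
        unfolding sig_def[of x] by (rule lin_sw_map[OF l2])
      also have "\<dots> = sw Delta (\<lambda>u v. sw Delta (\<lambda>p q. g (B1 u * S (B2 v)) (B1 p * S (B2 q))) y) x"
        apply (rule sw_cong) unfolding sig_def[of y] by (rule lin_sw_map[OF l1])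
      finally show ?thesis by simp
    qed
  qed
  finally show ?thesis .
qed

lemma sig_sig: "sig (sig a) = sig a"
proof -
  have bb: "bl (\<lambda>x y. B1 x * S (B2 y))" by (rule LR2)+
  have "sig (sig a) = sw Delta (\<lambda>x y. B1 x * S (B2 y)) (sig a)" by (rule sig_def)
  also have "\<dots> = sw Delta (\<lambda>x y. B1 (sig x) * S (B2 (sig y))) a" by (rule sig_D[OF bb])
  also have "\<dots> = sig a" unfolding B1_sig B2_sig by (simp add: sig_def)
  finally show ?thesis .
qed

lemma sig_id: "sig a = a"
proof -
  obtain c where "a = sig c" using SU unfolding sig_eq by (metis surjD)
  then show ?thesis by (simp add: sig_sig)
qed


lemma B1_exp: "B1 a = sw Delta (\<lambda>x y. x * B2 y) a"
proof -
  have "sw Delta (\<lambda>x y. x * B2 y) a = sw Delta (\<lambda>x y. sw Delta (\<lambda>u v. B1 u * S (B2 v) * B2 y) x) a"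
  proof (rule sw_cong)
    fix x y
    have l: "lin (\<lambda>z. z * B2 y)" by (rule LR2)+
    show "x * B2 y = sw Delta (\<lambda>u v. B1 u * S (B2 v) * B2 y) x"
      using lin_sw_map[OF l, where D=Delta and g="\<lambda>u v. B1 u * S (B2 v)" and a=x] by (simp add: sig_def[symmetric] sig_id)
  qed
  also have "\<dots> = sw Delta (\<lambda>x y. sw Delta (\<lambda>u v. B1 x * S (B2 u) * B2 v) y) a"
    by (rule coassoc) (rule LR2)+
  also have "\<dots> = sw Delta (\<lambda>x y. sc (eps y) (B1 x)) a"
  proof (rule sw_cong)
    fix x y
    have l: "lin (\<lambda>z. B1 x * z)" by (rule LR2)+
    have b: "bl (\<lambda>u v. S u * v)" by (rule LR2)+
    have "sw Delta (\<lambda>u v. S (B2 u) * B2 v) y = sc (eps y) 1"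
      using chom[OF ch2 b, of y] anti1[of "B2 y"] by (simp add: eps_B2)
    then show "sw Delta (\<lambda>u v. B1 x * S (B2 u) * B2 v) y = sc (eps y) (B1 x)"
      using lin_sw_map[OF l, where D=Delta and g="\<lambda>u v. S (B2 u) * B2 v" and a=y] by (simp add: mult.assoc sc_out)
  qed
  also have "\<dots> = B1 a"
    using lin_sw_map[OF B1_lin, where D=Delta and g="\<lambda>x y. sc (eps y) x" and a=a] by (simp add: counit2 lin_scale[OF B1_lin])
  finally show ?thesis by simp
qed

lemma B2_exp: "B2 a = sw Delta (\<lambda>x y. S x * B1 y) a"
proof -
  have "sw Delta (\<lambda>x y. S x * B1 y) a = sw Delta (\<lambda>x y. sw Delta (\<lambda>u v. S x * u * B2 v) y) a"
  proof (rule sw_cong)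
    fix x y
    have l: "lin (\<lambda>z. S x * z)" by (rule LR2)+
    show "S x * B1 y = sw Delta (\<lambda>u v. S x * u * B2 v) y"
      using lin_sw_map[OF l, where D=Delta and g="\<lambda>u v. u * B2 v" and a=y] by (simp add: B1_exp[of y] mult.assoc)
  qed
  also have "\<dots> = sw Delta (\<lambda>x y. sw Delta (\<lambda>u v. S u * v * B2 y) x) a"
    by (rule coassoc[of "\<lambda>x u v. S x * u * B2 v", symmetric]) (rule LR2)+
  also have "\<dots> = sw Delta (\<lambda>x y. sc (eps x) (B2 y)) a"
  proof (rule sw_cong)
    fix x y
    have l: "lin (\<lambda>z. z * B2 y)" by (rule LR2)+
    show "sw Delta (\<lambda>u v. S u * v * B2 y) x = sc (eps x) (B2 y)"
      using lin_sw_map[OF l, where D=Delta and g="\<lambda>u v. S u * v" and a=x] by (simp add: anti1 sc_out)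
  qed
  also have "\<dots> = B2 a"
    using lin_sw_map[OF B2_lin, where D=Delta and g="\<lambda>x y. sc (eps x) y" and a=a] by (simp add: counit1 lin_scale[OF B2_lin])
  finally show ?thesis by simp
qed

lemma hopf_B2: "rb_hopf sc Delta eps S B2"
  unfolding rb_hopf_def
proof (intro conjI allI)
  show "cocomm_hopf sc Delta eps S" by (rule H)
  show "coalg_hom sc Delta eps B2" by (rule ch2)
  fix a b
  have "sw Delta (\<lambda>x y. B1 x * b * S (B2 y)) a = sw Delta (\<lambda>x y. sw Delta (\<lambda>u v. u * B2 v * b * S (B2 y)) x) a"
  proof (rule sw_cong)
    fix x y
    have l: "lin (\<lambda>z. z * b * S (B2 y))" by (rule LR2)+
    show "B1 x * b * S (B2 y) = sw Delta (\<lambda>u v. u * B2 v * b * S (B2 y)) x"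
      using lin_sw_map[OF l, where D=Delta and g="\<lambda>u v. u * B2 v" and a=x] by (simp add: B1_exp[of x])
  qed
  also have "\<dots> = sw Delta (\<lambda>x y. sw Delta (\<lambda>u v. x * B2 u * b * S (B2 v)) y) a"
    by (rule coassoc) (rule LR2)+
  finally show "B2 a * B2 b = B2 (sw Delta (\<lambda>x y. sw Delta (\<lambda>u v. x * B2 u * b * S (B2 v)) y) a)"
    by (simp add: RB2)
qed

lemma SB2: "S (B2 c) = sw Delta (\<lambda>p q. S (B1 q) * p) c"
  unfolding B2_exp[of c] lin_sw_map[OF S_lin] by (simp add: S_mult S_S)

lemma hopf_B1S: "rb_hopf sc Delta eps S (B1 \<circ> S)"
  unfolding rb_hopf_def
proof (intro conjI allI)
  show "cocomm_hopf sc Delta eps S" by (rule H)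
  show "coalg_hom sc Delta eps (B1 \<circ> S)"
    unfolding coalg_hom_def
  proof (intro conjI allI)
    have "lin (\<lambda>x. B1 (S x))" by (rule LR2)+
    then show "Vector_Spaces.linear sc sc (B1 \<circ> S)" by (simp add: linear_lin o_def)
  next
    fix a show "eps ((B1 \<circ> S) a) = eps a" by (simp add: eps_B1 eps_S)
  next
    fix a
    show "teq sc (\<lambda>f. sw Delta f ((B1 \<circ> S) a)) (\<lambda>f. sw Delta (\<lambda>x y. f ((B1 \<circ> S) x) ((B1 \<circ> S) y)) a)"
      unfolding teq_def
    proof (intro allI impI)
      fix f assume bf: "bilin sc f"
      define g where "g x y = sc (f x y) 1" for x y
      have kf1: "klin (f x)" and kf2: "klin (\<lambda>z. f z y)" for x y
        using bf by (simp_all add: bilin_def linear_klin)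
      have bg: "bl g" unfolding g_def bl_def lin_def
        by (simp add: klin_add[OF kf1] klin_add[OF kf2] klin_scale[OF kf1] klin_scale[OF kf2]
            V.scale_left_distrib V.scale_scale)
      have ev: "sw Delta f c = eps (sw Delta g c)" for c
        by (simp add: klin_sw_map[OF eps_klin] g_def eps_sc eps_1)
      have b2: "bl (\<lambda>x y. g (B1 x) (B1 y))" by (rule LR2 lin_bl1[OF bg] lin_bl2[OF bg])+
      show "sw Delta f ((B1 \<circ> S) a) = sw Delta (\<lambda>x y. f ((B1 \<circ> S) x) ((B1 \<circ> S) y)) a"
        unfolding ev o_def chom[OF ch1 bg] DS[OF b2] by (simp add: g_def klin_sw_map[OF eps_klin] eps_sc eps_1)
    qed
  qed
next
  fix a b
  define F where "F x p q = B1 (S x) * S b * S (B1 (S q)) * S p" for x p q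
  have tF: "tl F" unfolding F_def by (rule LR2)+
  have "B1 (S a) * B1 (S b) = B1 (sw Delta (\<lambda>x y. B1 (S x) * S b * S (B2 (S y))) a)"
  proof -
    have bb: "bl (\<lambda>x y. B1 x * S b * S (B2 y))" by (rule LR2)+
    show ?thesis by (simp add: RB1 DS[OF bb])
  qed
  also have "sw Delta (\<lambda>x y. B1 (S x) * S b * S (B2 (S y))) a = sw Delta (\<lambda>x y. sw Delta (\<lambda>p q. F x p q) y) a"
  proof (rule sw_cong)
    fix x y
    have l: "lin (\<lambda>z. B1 (S x) * S b * z)" by (rule LR2)+
    have bb: "bl (\<lambda>p q. S (B1 q) * p)" by (rule LR2)+
    show "B1 (S x) * S b * S (B2 (S y)) = sw Delta (\<lambda>p q. F x p q) y"
      unfolding SB2 DS[OF bb] lin_sw_map[OF l] F_def by (simp add: mult.assoc)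
  qed
  also have "\<dots> = sw Delta (\<lambda>x y. sw Delta (\<lambda>u v. F u x v) y) a"
    by (rule sym12[OF tF])
  also have "\<dots> = sw Delta (\<lambda>x y. sw Delta (\<lambda>u v. F v x u) y) a"
    by (rule sym23) (unfold F_def, (rule LR2)+)
  also have "\<dots> = S (sw Delta (\<lambda>x y. sw Delta (\<lambda>u v. x * (B1 \<circ> S) u * b * S ((B1 \<circ> S) v)) y) a)"
    unfolding lin_sw_map[OF S_lin] by (simp add: F_def S_mult S_S mult.assoc)
  finally show "(B1 \<circ> S) a * (B1 \<circ> S) b = (B1 \<circ> S) (sw Delta (\<lambda>x y. sw Delta (\<lambda>u v. x * (B1 \<circ> S) u * b * S ((B1 \<circ> S) v)) y) a)"
    by simp
qed

end

theorem mainTheorem5: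
  fixes sc :: "'k::field_char_0 \<Rightarrow> 'h::ring_1 \<Rightarrow> 'h"
    and Delta :: "'h \<Rightarrow> ('h \<times> 'h) list"
    and eps :: "'h \<Rightarrow> 'k"
    and S B1 B2 :: "'h \<Rightarrow> 'h"
  assumes "rb_system sc Delta eps S B1 B2"
    and "surj (rbs_cocycle Delta S B1 B2)"
  shows "rb_hopf sc Delta eps S B2 \<and> rb_hopf sc Delta eps S (B1 \<circ> S)"
proof -
  have "rbctx sc Delta eps S B1 B2"
    unfolding rbctx_def rbctx_axioms_def hctx_def using assms by (simp add: rb_system_def)
  then interpret R: rbctx sc Delta eps S B1 B2 .
  show ?thesis using R.hopf_B2 R.hopf_B1S by simp
qed

end
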